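(* Let $f$ be a homeomorphism of a compact metric space $(X,d)$ such that: (1) for every $\epsilon>0$ there is $\delta>0$ such that $d(a,b)<\delta$ implies $W^s_\epsilon(a)\cap W^u_\epsilon(b)\ne\emptyset$; and (2) for every $x\in X$ there is $c>0$ with $W^s_c(x)=\{x\}$. Then $X$ is finite.
   Context: $W^s_\epsilon(x)=\{y\in X: d(f^n(x),f^n(y))\le\epsilon\ \forall n\ge0\}$ and $W^u_\epsilon(x)=\{y\in X: d(f^{-n}(x),f^{-n}(y))\le\epsilon\ \forall n\ge0\}$. *)

theory Defs
  imports "HOL-Analysis.Analysis"
begin

definition stable_set :: "'a::metric_space set \<Rightarrow> ('a \<Rightarrow> 'a) \<Rightarrow> real \<Rightarrow> 'a \<Rightarrow> 'a set" where
  "stable_set X f e x = {y \<in> X. \<forall>n::nat. dist ((f ^^ n) x) ((f ^^ n) y) \<le> e}"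

definition unstable_set :: "'a::metric_space set \<Rightarrow> ('a \<Rightarrow> 'a) \<Rightarrow> real \<Rightarrow> 'a \<Rightarrow> 'a set" where
  "unstable_set X finv e x = {y \<in> X. \<forall>n::nat. dist ((finv ^^ n) x) ((finv ^^ n) y) \<le> e}"

end

theory Submission
  imports Defs "HOL-Library.FuncSet"
begin

lemma funpow_in:
  assumes "\<And>x. x \<in> X \<Longrightarrow> h x \<in> X" "x \<in> X"
  shows "(h ^^ n) x \<in> X"
  using assms(2) by (induction n) (auto intro: assms(1))

lemma funpow_inv:
  assumes "\<And>x. x \<in> X \<Longrightarrow> f x \<in> X" "\<And>x. x \<in> X \<Longrightarrow> g (f x) = x" "w \<in> X"
  shows "(g ^^ n) ((f ^^ n) w) = w"
  using assms(3)
proof (induction n arbitrary: w)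
  case 0 then show ?case by simp
next
  case (Suc n)
  have "(g ^^ Suc n) ((f ^^ Suc n) w) = (g ^^ n) (g (f ((f ^^ n) w)))"
    by (simp add: funpow_swap1)
  also have "\<dots> = (g ^^ n) ((f ^^ n) w)"
    using assms(2) funpow_in[of X f, OF assms(1) Suc.prems] by simp
  also have "\<dots> = w" using Suc by simp
  finally show ?case .
qed

lemma compact_isolated_finite:
  fixes X :: "'a::metric_space set"
  assumes "compact X" and iso: "\<forall>x\<in>X. \<exists>r>0. \<forall>y\<in>X. dist x y < r \<longrightarrow> y = x"
  shows "finite X"
proof -
  obtain r where r: "\<And>x. x \<in> X \<Longrightarrow> r x > 0 \<and> (\<forall>y\<in>X. dist x y < r x \<longrightarrow> y = x)"
    using iso by metis
  have "X \<subseteq> (\<Union>x\<in>X. ball x (r x))" using r by force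
  then obtain C where C: "C \<subseteq> X" "finite C" "X \<subseteq> (\<Union>x\<in>C. ball x (r x))"
    using compactE_image[OF assms(1), of X "\<lambda>x. ball x (r x)"] by blast
  have "X \<subseteq> C"
  proof
    fix y assume y: "y \<in> X"
    then obtain x where "x \<in> C" "dist x y < r x" using C(3) by auto
    then have "y = x" using r[of x] C(1) y by auto
    then show "y \<in> C" using \<open>x \<in> C\<close> by simp
  qed
  then show ?thesis using C(2) finite_subset by blast
qed

theorem mainTheorem17:
  fixes X :: "'a::metric_space set" and f g :: "'a \<Rightarrow> 'a"
  assumes "compact X"
    and "homeomorphism X X f g"
    and "\<forall>e>0. \<exists>\<delta>>0. \<forall>a\<in>X. \<forall>b\<in>X. dist a b < \<delta> \<longrightarrow>
            stable_set X f e a \<inter> unstable_set X g e b \<noteq> {}"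
    and "\<forall>x\<in>X. \<exists>c>0. stable_set X f c x = {x}"
  shows "finite X"
proof -
  have fX: "\<And>x. x \<in> X \<Longrightarrow> f x \<in> X" and gX: "\<And>x. x \<in> X \<Longrightarrow> g x \<in> X"
    and gf: "\<And>x. x \<in> X \<Longrightarrow> g (f x) = x"
    using assms(2) unfolding homeomorphism_def by auto
  have fnX: "\<And>x n. x \<in> X \<Longrightarrow> (f ^^ n) x \<in> X" using funpow_in fX by metis
  have gnX: "\<And>x n. x \<in> X \<Longrightarrow> (g ^^ n) x \<in> X" using funpow_in gX by metis
  have gnfn: "\<And>x n. x \<in> X \<Longrightarrow> (g ^^ n) ((f ^^ n) x) = x" using funpow_inv fX gf by metis
  obtain c where c: "\<And>x. x \<in> X \<Longrightarrow> c x > 0 \<and> stable_set X f (c x) x = {x}"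
    using assms(4) by metis
  have pw: "\<exists>d>0. \<forall>b\<in>X. dist x b < d \<longrightarrow> (\<forall>k. dist ((g ^^ k) x) ((g ^^ k) b) \<le> e)"
    if x: "x \<in> X" and e: "e > 0" for x e
  proof -
    define e' where "e' = min e (c x)"
    have e': "e' > 0" using e c[OF x] by (simp add: e'_def)
    obtain d where d: "d > 0" "\<forall>a\<in>X. \<forall>b\<in>X. dist a b < d \<longrightarrow>
            stable_set X f e' a \<inter> unstable_set X g e' b \<noteq> {}"
      using assms(3) e' by blast
    show ?thesis
    proof (intro exI[of _ d] conjI ballI impI allI)
      show "d > 0" by fact
      fix b k assume b: "b \<in> X" "dist x b < d"
      then obtain y where y1: "y \<in> stable_set X f e' x" and y2: "y \<in> unstable_set X g e' b"
        using d(2) x by blast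
      have "y \<in> stable_set X f (c x) x"
        using y1 unfolding stable_set_def e'_def by (auto intro: order_trans)
      then have "y = x" using c[OF x] by auto
      then have "dist ((g ^^ k) b) ((g ^^ k) x) \<le> e'" using y2 unfolding unstable_set_def by auto
      then show "dist ((g ^^ k) x) ((g ^^ k) b) \<le> e" by (simp add: dist_commute e'_def)
    qed
  qed
  have unif: "\<exists>\<eta>>0. \<forall>a\<in>X. \<forall>b\<in>X. dist a b < \<eta> \<longrightarrow> (\<forall>k. dist ((g ^^ k) a) ((g ^^ k) b) \<le> e)"
    if e: "e > 0" for e
  proof -
    obtain d where d: "\<And>x. x \<in> X \<Longrightarrow> d x > 0 \<and> (\<forall>b\<in>X. dist x b < d x \<longrightarrow> (\<forall>k. dist ((g ^^ k) x) ((g ^^ k) b) \<le> e/2))"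
    proof -
      have "\<forall>x\<in>X. \<exists>d>0. \<forall>b\<in>X. dist x b < d \<longrightarrow> (\<forall>k. dist ((g ^^ k) x) ((g ^^ k) b) \<le> e/2)"
        using pw[of _ "e/2"] e by (meson half_gt_zero)
      then show ?thesis using that by metis
    qed
    have "X \<subseteq> \<Union>((\<lambda>x. ball x (d x)) ` X)" using d by force
    then obtain \<eta> where \<eta>: "\<eta> > 0" "\<And>x. x \<in> X \<Longrightarrow> \<exists>G \<in> (\<lambda>x. ball x (d x)) ` X. ball x \<eta> \<subseteq> G"
      using Heine_Borel_lemma[OF assms(1)] by blast
    show ?thesis
    proof (intro exI[of _ \<eta>] conjI ballI impI allI)
      show "\<eta> > 0" by fact
      fix a b k assume a: "a \<in> X" and b: "b \<in> X" and ab: "dist a b < \<eta>"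
      obtain x where x: "x \<in> X" "ball a \<eta> \<subseteq> ball x (d x)" using \<eta>(2)[OF a] by blast
      have "a \<in> ball x (d x)" "b \<in> ball x (d x)" using x(2) ab \<eta>(1) by (auto simp: subset_iff dist_commute)
      then have "dist ((g ^^ k) x) ((g ^^ k) a) \<le> e/2" "dist ((g ^^ k) x) ((g ^^ k) b) \<le> e/2"
        using d[OF x(1)] a b by auto
      then show "dist ((g ^^ k) a) ((g ^^ k) b) \<le> e"
        using dist_triangle2[of "(g ^^ k) a" "(g ^^ k) b" "(g ^^ k) x"] by (simp add: dist_commute)
    qed
  qed
  have ap: "\<exists>m\<ge>n. \<forall>w\<in>X. dist w ((g ^^ m) w) < \<epsilon>" if eps: "\<epsilon> > 0" for \<epsilon> n
  proof -
    obtain \<eta> where \<eta>: "\<eta> > 0" "\<forall>a\<in>X. \<forall>b\<in>X. dist a b < \<eta> \<longrightarrow> (\<forall>k. dist ((g ^^ k) a) ((g ^^ k) b) \<le> \<epsilon>/5)"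
      using unif[of "\<epsilon>/5"] eps by auto
    have "X \<subseteq> (\<Union>x\<in>X. ball x \<eta>)" using \<eta>(1) by force
    then obtain S where S: "S \<subseteq> X" "finite S" "X \<subseteq> (\<Union>x\<in>S. ball x \<eta>)"
      using compactE_image[OF assms(1), of X "\<lambda>x. ball x \<eta>"] by blast
    have "X \<subseteq> (\<Union>x\<in>X. ball x (\<epsilon>/5))" using eps by force
    then obtain T where T: "T \<subseteq> X" "finite T" "X \<subseteq> (\<Union>x\<in>T. ball x (\<epsilon>/5))"
      using compactE_image[OF assms(1), of X "\<lambda>x. ball x (\<epsilon>/5)"] by blast
    define pick where "pick w = (SOME t. t \<in> T \<and> dist w t < \<epsilon>/5)" for w
    have pick: "pick w \<in> T \<and> dist w (pick w) < \<epsilon>/5" if wX: "w \<in> X" for w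
    proof -
      obtain t where "t \<in> T" "w \<in> ball t (\<epsilon>/5)" using T(3) wX by blast
      then have "\<exists>t. t \<in> T \<and> dist w t < \<epsilon>/5" by (auto simp: dist_commute)
      then show ?thesis unfolding pick_def by (rule someI_ex)
    qed
    define cls where "cls i = restrict (\<lambda>s. pick ((g ^^ (i * Suc n)) s)) S" for i
    have "range cls \<subseteq> (\<Pi>\<^sub>E s\<in>S. T)"
      using pick gnX S(1) by (auto simp: cls_def)
    then have "finite (range cls)"
      using finite_PiE[OF S(2), of "\<lambda>_. T"] T(2) finite_subset by blast
    then have "\<not> inj cls" using finite_imageD infinite_UNIV_nat by blast
    then obtain k1 k2 where k: "k1 \<noteq> k2" "cls k1 = cls k2" unfolding inj_def by blast
    then obtain i1 i2 where i: "i1 < i2" "cls i1 = cls i2"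
      by (metis linorder_neq_iff)
    define m where "m = i2 * Suc n - i1 * Suc n"
    have mn: "m \<ge> n"
    proof -
      have "i2 * Suc n \<ge> (i1 + 1) * Suc n" using i(1) by (intro mult_right_mono) auto
      then show ?thesis unfolding m_def by simp
    qed
    show ?thesis
    proof (intro exI[of _ m] conjI ballI)
      show "m \<ge> n" by fact
      fix w assume w: "w \<in> X"
      define p where "p = i1 * Suc n"
      define q where "q = i2 * Suc n"
      have "p \<le> q" unfolding p_def q_def using i(1) by (intro mult_right_mono) auto
      then have pq: "q = m + p" unfolding m_def p_def[symmetric] q_def[symmetric] by simp
      define z where "z = (f ^^ p) w"
      have z: "z \<in> X" using fnX w by (simp add: z_def)
      have gpz: "(g ^^ p) z = w" using gnfn w by (simp add: z_def)
      have gqz: "(g ^^ q) z = (g ^^ m) w" using gpz by (simp add: pq funpow_add)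
      obtain s where s: "s \<in> S" "z \<in> ball s \<eta>" using S(3) z by auto
      have sX: "s \<in> X" using s S(1) by auto
      have d1: "dist ((g ^^ p) s) ((g ^^ p) z) \<le> \<epsilon>/5" and d2: "dist ((g ^^ q) s) ((g ^^ q) z) \<le> \<epsilon>/5"
        using \<eta>(2) sX z s(2) by auto
      have "cls i1 s = cls i2 s" using i(2) by simp
      then have pe: "pick ((g ^^ p) s) = pick ((g ^^ q) s)" using s(1) by (simp add: cls_def p_def q_def)
      have d3: "dist ((g ^^ p) s) (pick ((g ^^ p) s)) < \<epsilon>/5" using pick gnX sX by blast
      have d4: "dist ((g ^^ q) s) (pick ((g ^^ q) s)) < \<epsilon>/5" using pick gnX sX by blast
      have "dist w ((g ^^ m) w) \<le> dist ((g ^^ p) z) ((g ^^ p) s) + dist ((g ^^ p) s) ((g ^^ q) z)"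
        using dist_triangle gpz gqz by metis
      also have "dist ((g ^^ p) s) ((g ^^ q) z) \<le> dist ((g ^^ p) s) (pick ((g ^^ p) s)) + dist (pick ((g ^^ p) s)) ((g ^^ q) z)"
        by (rule dist_triangle)
      also have "dist (pick ((g ^^ p) s)) ((g ^^ q) z) \<le> dist (pick ((g ^^ q) s)) ((g ^^ q) s) + dist ((g ^^ q) s) ((g ^^ q) z)"
        unfolding pe by (rule dist_triangle)
      finally show "dist w ((g ^^ m) w) < \<epsilon>"
        using d1 d2 d3 d4 eps by (simp add: dist_commute)
    qed
  qed
  have iso: "\<forall>x\<in>X. \<exists>r>0. \<forall>y\<in>X. dist x y < r \<longrightarrow> y = x"
  proof
    fix x assume x: "x \<in> X"
    define cx where "cx = c x"
    have cx: "cx > 0" "stable_set X f cx x = {x}" using c[OF x] by (auto simp: cx_def)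
    obtain \<eta> where \<eta>: "\<eta> > 0" "\<forall>a\<in>X. \<forall>b\<in>X. dist a b < \<eta> \<longrightarrow> (\<forall>k. dist ((g ^^ k) a) ((g ^^ k) b) \<le> cx/3)"
      using unif[of "cx/3"] cx by auto
    show "\<exists>r>0. \<forall>y\<in>X. dist x y < r \<longrightarrow> y = x"
    proof (intro exI[of _ \<eta>] conjI ballI impI)
      show "\<eta> > 0" by fact
      fix y assume y: "y \<in> X" "dist x y < \<eta>"
      have "\<forall>n. dist ((f ^^ n) x) ((f ^^ n) y) \<le> cx"
      proof
        fix n
        obtain m where m: "m \<ge> n" "\<forall>w\<in>X. dist w ((g ^^ m) w) < cx/3"
          using ap[of "cx/3" n] cx by auto
        have e1: "(g ^^ m) ((f ^^ n) x) = (g ^^ (m - n)) x"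
        proof -
          have "(g ^^ m) ((f ^^ n) x) = (g ^^ (m - n)) ((g ^^ n) ((f ^^ n) x))"
            using m(1) by (metis funpow_add le_add_diff_inverse2 comp_apply)
          then show ?thesis using gnfn x by simp
        qed
        have e2: "(g ^^ m) ((f ^^ n) y) = (g ^^ (m - n)) y"
        proof -
          have "(g ^^ m) ((f ^^ n) y) = (g ^^ (m - n)) ((g ^^ n) ((f ^^ n) y))"
            using m(1) by (metis funpow_add le_add_diff_inverse2 comp_apply)
          then show ?thesis using gnfn y by simp
        qed
        have a1: "dist ((f ^^ n) x) ((g ^^ (m - n)) x) < cx/3" using m(2) fnX x e1 by metis
        have a2: "dist ((f ^^ n) y) ((g ^^ (m - n)) y) < cx/3" using m(2) fnX y e2 by metis
        have a3: "dist ((g ^^ (m - n)) x) ((g ^^ (m - n)) y) \<le> cx/3" using \<eta>(2) x y by blast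
        have "dist ((f ^^ n) x) ((f ^^ n) y) \<le> dist ((f ^^ n) x) ((g ^^ (m - n)) x) + dist ((g ^^ (m - n)) x) ((f ^^ n) y)"
          by (rule dist_triangle)
        also have "dist ((g ^^ (m - n)) x) ((f ^^ n) y) \<le> dist ((g ^^ (m - n)) x) ((g ^^ (m - n)) y) + dist ((g ^^ (m - n)) y) ((f ^^ n) y)"
          by (rule dist_triangle)
        finally show "dist ((f ^^ n) x) ((f ^^ n) y) \<le> cx"
          using a1 a2 a3 by (simp add: dist_commute)
      qed
      then have "y \<in> stable_set X f cx x" using y unfolding stable_set_def by auto
      then show "y = x" using cx by auto
    qed
  qed
  show ?thesis by (rule compact_isolated_finite[OF assms(1) iso])
qed

end
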